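(* Let $n>k\ge 1$ be integers, not both even, let $\alpha=\lceil n/2\rceil-\lfloor (n-k)/2\rfloor$, $\beta=k-\alpha$, and $G=\sqrt{n/k}\,W_n^H\Sigma W_k$. Among all $k\times k$ submatrices $G_k$ of $G$ formed by $k$ distinct rows, $\det(G_kG_k^H)$ is minimized when the selected row indices are circularly successive, i.e. of the form $\{i,i+1,\dots,i+k-1\}$ with indices taken modulo $n$ in $\{1,\dots,n\}$; in that case $\det(G_kG_k^H)=\frac{2^{k(k-1)}}{k^k}\prod_{r=1}^{k-1}\left(\sin^2\frac{\pi r}{n}\right)^{k-r}$.
   Context: For a positive integer $l$, $W_l$ denotes the unitary $l\times l$ DFT matrix, $(W_l)_{r,s}=\frac{1}{\sqrt l}e^{-j2\pi(r-1)(s-1)/l}$, and $^H$ denotes conjugate transpose. $\Sigma$ is the $n\times k$ matrix $\begin{pmatrix} I_\alpha & 0\\ 0 & 0\\ 0 & I_\beta\end{pmatrix}$: its first $\alpha$ rows are $(I_\alpha\ 0)$, its last $\beta$ rows are $(0\ I_\beta)$, and its middle $n-k$ rows are zero. *)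

theory Defs
  imports Complex_Main "Jordan_Normal_Form.Determinant"
begin

text \<open>Matrices are 0-indexed JNF matrices; the paper's index r (1-based) is r+1 here.\<close>

definition mat_H :: "complex mat \<Rightarrow> complex mat" where
  "mat_H A = mat (dim_col A) (dim_row A) (\<lambda>(i,j). cnj (A $$ (j,i)))"

definition DFT :: "nat \<Rightarrow> complex mat" where
  "DFT l = mat l l (\<lambda>(r,s). complex_of_real (1 / sqrt (real l)) *
      exp (- \<i> * complex_of_real (2 * pi * real r * real s / real l)))"

definition alpha :: "nat \<Rightarrow> nat \<Rightarrow> nat" where
  "alpha n k = nat (\<lceil>real n / 2\<rceil> - \<lfloor>real (n - k) / 2\<rfloor>)"

definition beta :: "nat \<Rightarrow> nat \<Rightarrow> nat" where
  "beta n k = k - alpha n k"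

text \<open>The n x k selection matrix Sigma: first alpha rows (I_alpha 0),
  middle n-k rows zero, last beta rows (0 I_beta).\<close>
definition Sigma_mat :: "nat \<Rightarrow> nat \<Rightarrow> complex mat" where
  "Sigma_mat n k = mat n k (\<lambda>(r,s).
      if (r < alpha n k \<and> s = r) \<or> (n - beta n k \<le> r \<and> s + n = r + k) then 1 else 0)"

definition G_mat :: "nat \<Rightarrow> nat \<Rightarrow> complex mat" where
  "G_mat n k = complex_of_real (sqrt (real n / real k)) \<cdot>\<^sub>m
      (mat_H (DFT n) * Sigma_mat n k * DFT k)"

definition row_submat :: "complex mat \<Rightarrow> nat list \<Rightarrow> complex mat" where
  "row_submat A rs = mat (length rs) (dim_col A) (\<lambda>(i,j). A $$ (rs ! i, j))"

definition circ_succ :: "nat \<Rightarrow> nat \<Rightarrow> nat \<Rightarrow> nat set" where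
  "circ_succ n k i = (\<lambda>t. (i + t) mod n) ` {..<k}"

end

theory Submission
  imports Defs "HOL-Analysis.Complex_Transcendental" "HOL-Analysis.Convex"
begin


interpretation cnj_hom: comm_ring_hom cnj
  by unfold_locales auto

lemma mat_H_carrier: "A \<in> carrier_mat a b \<Longrightarrow> mat_H A \<in> carrier_mat b a"
  unfolding mat_H_def by auto

lemma det_mat_H: assumes "A \<in> carrier_mat m m" shows "det (mat_H A) = cnj (det A)"
proof -
  have "mat_H A = transpose_mat (map_mat cnj A)"
    using assms by (intro eq_matI) (auto simp: mat_H_def)
  then have "det (mat_H A) = det (map_mat cnj A)"
    using assms by (simp add: det_transpose)
  then show ?thesis by simp
qed

lemma det_mult_H: assumes "A \<in> carrier_mat m m"
  shows "det (A * mat_H A) = complex_of_real ((cmod (det A))^2)"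
proof -
  have "det (A * mat_H A) = det A * cnj (det A)"
    using assms mat_H_carrier[OF assms] by (simp add: det_mult det_mat_H)
  then show ?thesis by (metis complex_norm_square of_real_power)
qed

definition vdm :: "nat \<Rightarrow> (nat \<Rightarrow> complex) \<Rightarrow> complex mat" where
  "vdm m z = Matrix.mat m m (\<lambda>(i,c). z i ^ c)"

lemma prod_pairs_Suc:
  "(\<Prod>j<Suc m. \<Prod>i<j. (z j - z i :: complex)) =
   (\<Prod>i<m. (z (Suc i) - z 0)) * (\<Prod>j<m. \<Prod>i<j. (z (Suc j) - z (Suc i)))"
  by (simp add: prod.lessThan_Suc_shift prod.distrib del: prod.lessThan_Suc)

lemma det_vdm: "det (vdm m z) = (\<Prod>j<m. \<Prod>i<j. (z j - z i))"
proof (induction m arbitrary: z)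
  case 0
  then show ?case by (simp add: vdm_def)
next
  case (Suc m)
  define B :: "complex mat" where "B = Matrix.mat (Suc m) (Suc m) (\<lambda>(r,c).
     (if r = c then 1 else 0) + (if Suc r = c then - z 0 else 0))"
  have Bc: "B \<in> carrier_mat (Suc m) (Suc m)" by (simp add: B_def)
  have Vc: "vdm (Suc m) z \<in> carrier_mat (Suc m) (Suc m)" by (simp add: vdm_def)
  have ut: "upper_triangular B" unfolding upper_triangular_def B_def by auto
  have "diag_mat B = map (\<lambda>i. 1) [0..<Suc m]" unfolding diag_mat_def
    by (intro map_cong) (auto simp: B_def)
  then have dB: "det B = 1"
    using det_upper_triangular[OF ut Bc] by (simp add: map_replicate_const)
  define M where "M = vdm (Suc m) z * B"
  have Mc: "M \<in> carrier_mat (Suc m) (Suc m)" using Vc Bc by (simp add: M_def)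
  have dM: "det M = det (vdm (Suc m) z)" using Vc Bc dB by (simp add: M_def det_mult)
  have Mentry: "M $$ (i, c) = z i ^ c - (if c = 0 then 0 else z 0 * z i ^ (c - 1))"
    if "i < Suc m" "c < Suc m" for i c
  proof -
    have "M $$ (i,c) = (\<Sum>r<Suc m. z i ^ r * ((if r = c then 1 else 0) + (if Suc r = c then - z 0 else 0)))"
      using that by (simp add: M_def vdm_def B_def scalar_prod_def atLeast0LessThan)
    also have "\<dots> = (\<Sum>r<Suc m. z i ^ r * (if r = c then 1 else 0)) + (\<Sum>r<Suc m. z i ^ r * (if Suc r = c then - z 0 else 0))"
      by (simp only: distrib_left sum.distrib)
    also have "\<dots> = (\<Sum>r<Suc m. (if r = c then z i ^ r else 0)) + (\<Sum>r<Suc m. (if Suc r = c then - z 0 * z i ^ r else 0))"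
      by (intro arg_cong2[where f="(+)"] sum.cong) auto
    also have "\<dots> = z i ^ c - (if c = 0 then 0 else z 0 * z i ^ (c - 1))"
    proof (cases c)
      case 0 then show ?thesis using that by simp
    next
      case (Suc c')
      have "(\<Sum>r<Suc m. (if Suc r = c then - z 0 * z i ^ r else 0)) = (\<Sum>r<Suc m. (if r = c' then - z 0 * z i ^ r else 0))"
        using Suc by (intro sum.cong) auto
      also have "\<dots> = - z 0 * z i ^ c'" using Suc that by simp
      finally show ?thesis using Suc that by simp
    qed
    finally show ?thesis .
  qed
  have row0: "M $$ (0, j) = (if j = 0 then 1 else 0)" if "j < Suc m" for j
    using Mentry[OF _ that] by (cases j) auto
  have "det M = (\<Sum>j<Suc m. M $$ (0,j) * cofactor M 0 j)"
    using laplace_expansion_row[OF Mc] by simp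
  also have "\<dots> = (\<Sum>j<Suc m. if j = 0 then cofactor M 0 0 else 0)"
    by (intro sum.cong) (auto simp: row0)
  also have "\<dots> = cofactor M 0 0" by simp
  also have "\<dots> = det (mat_delete M 0 0)" by (simp add: cofactor_def)
  finally have dM2: "det M = det (mat_delete M 0 0)" .
  define a where "a = (\<lambda>i. Matrix.vec m (\<lambda>c. z (Suc i) ^ c))"
  define cc where "cc = (\<lambda>i. z (Suc i) - z 0)"
  have del: "mat_delete M 0 0 = mat\<^sub>r m m (\<lambda>i. cc i \<cdot>\<^sub>v a i)"
  proof (rule eq_matI)
    fix i j assume ij: "i < dim_row (mat\<^sub>r m m (\<lambda>i. cc i \<cdot>\<^sub>v a i))" "j < dim_col (mat\<^sub>r m m (\<lambda>i. cc i \<cdot>\<^sub>v a i))"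
    then have "i < m" "j < m" by auto
    then show "mat_delete M 0 0 $$ (i, j) = mat\<^sub>r m m (\<lambda>i. cc i \<cdot>\<^sub>v a i) $$ (i, j)"
      using Mc by (simp add: mat_delete_def Mentry a_def cc_def algebra_simps)
  qed (use Mc in auto)
  have ac: "a \<in> {0..<m} \<rightarrow> carrier_vec m" by (auto simp: a_def)
  have ma: "mat\<^sub>r m m (\<lambda>i. a i) = vdm m (\<lambda>i. z (Suc i))"
    by (rule eq_matI) (auto simp: a_def vdm_def)
  have "det (vdm (Suc m) z) = prod cc {0..<m} * det (vdm m (\<lambda>i. z (Suc i)))"
    using dM dM2 del det_rows_mul[OF ac, of cc] ma by simp
  also have "\<dots> = (\<Prod>j<Suc m. \<Prod>i<j. (z j - z i))"
    unfolding prod_pairs_Suc Suc.IH cc_def by (simp add: atLeast0LessThan)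
  finally show ?case .
qed


lemma cis_eq_1_iff: "cis x = 1 \<longleftrightarrow> (\<exists>m::int. x = of_int m * 2 * pi)"
proof
  assume "cis x = 1"
  then have "cos x = 1" by (simp add: complex_eq_iff)
  then show "\<exists>m::int. x = of_int m * 2 * pi" using cos_one_2pi_int by blast
next
  assume "\<exists>m::int. x = of_int m * 2 * pi"
  then obtain m :: int where m: "x = of_int m * 2 * pi" by blast
  have c: "cos x = 1" using cos_one_2pi_int m by blast
  have "(sin x)^2 = 0" using sin_squared_eq[of x] c by simp
  then have "sin x = 0" by simp
  then show "cis x = 1" using c by (simp add: complex_eq_iff)
qed

lemma cis_2pi_nat: "cis (2 * pi * real (m::nat)) = 1"
  unfolding cis_eq_1_iff by (rule exI[of _ "int m"]) simp

lemma cis_2pi_int: "cis (2 * pi * real_of_int (m::int)) = 1"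
  unfolding cis_eq_1_iff by (rule exI[of _ m]) simp

lemma exp_to_cis: "exp (- \<i> * complex_of_real t) = cis (- t)"
  by (simp add: cis_conv_exp)

lemma DFT_entry: "r < l \<Longrightarrow> s < l \<Longrightarrow>
  DFT l $$ (r,s) = complex_of_real (1 / sqrt (real l)) * cis (- (2 * pi * real r * real s / real l))"
  by (simp add: DFT_def cis_conv_exp)

lemma DFT_carrier: "DFT l \<in> carrier_mat l l" by (simp add: DFT_def)
lemma DFT_dims[simp]: "dim_row (DFT l) = l" "dim_col (DFT l) = l" by (simp_all add: DFT_def)

lemma mat_H_DFT_entry: "r < l \<Longrightarrow> s < l \<Longrightarrow>
  mat_H (DFT l) $$ (s,r) = complex_of_real (1 / sqrt (real l)) * cis (2 * pi * real r * real s / real l)"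
proof -
  assume a: "r < l" "s < l"
  then have "mat_H (DFT l) $$ (s,r) = cnj (DFT l $$ (r,s))" by (simp add: mat_H_def)
  then show ?thesis using a by (simp add: DFT_entry cis_cnj)
qed

lemma root_sum:
  fixes l :: nat and a :: int
  assumes l: "l > 0" and a: "\<bar>a\<bar> < int l"
  shows "(\<Sum>s<l. cis (2 * pi * real_of_int a / real l) ^ s) = (if a = 0 then of_nat l else 0)"
proof (cases "a = 0")
  case True then show ?thesis by simp
next
  case False
  define w where "w = cis (2 * pi * real_of_int a / real l)"
  have e1: "real l * (2 * pi * real_of_int a / real l) = 2 * pi * real_of_int a" using l by simp
  have wl: "w ^ l = 1" unfolding w_def Complex.DeMoivre e1 by (rule cis_2pi_int)
  have "w \<noteq> 1"
  proof
    assume "w = 1"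
    then obtain m :: int where m: "2 * pi * real_of_int a / real l = of_int m * 2 * pi"
      unfolding w_def cis_eq_1_iff by blast
    then have "real_of_int a = of_int m * real l" using l by (simp add: field_simps)
    then have am: "a = m * int l" by (metis of_int_eq_iff of_int_mult of_int_of_nat_eq)
    show False
    proof (cases "m = 0")
      case True then show False using am False by simp
    next
      case m0: False
      then have "\<bar>m\<bar> \<ge> 1" by simp
      then have "\<bar>m\<bar> * int l \<ge> int l" using l by simp
      then show False using am a by (simp add: abs_mult)
    qed
  qed
  then show ?thesis using False wl by (simp add: sum_gp_strict w_def[symmetric])
qed

lemma DFT_unitary: assumes l: "l > 0" shows "DFT l * mat_H (DFT l) = 1\<^sub>m l"
proof (rule eq_matI)
  fix r r' assume rr: "r < dim_row (1\<^sub>m l)" "r' < dim_col (1\<^sub>m l)"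
  then have r: "r < l" "r' < l" by auto
  have "(DFT l * mat_H (DFT l)) $$ (r, r') = (\<Sum>s<l. DFT l $$ (r,s) * mat_H (DFT l) $$ (s,r'))"
    using r DFT_carrier[of l] mat_H_carrier[OF DFT_carrier[of l]]
    by (simp add: scalar_prod_def atLeast0LessThan)
  also have "\<dots> = (\<Sum>s<l. complex_of_real (1 / real l) * cis (2 * pi * real_of_int (int r' - int r) / real l) ^ s)"
  proof (intro sum.cong refl)
    fix s assume "s \<in> {..<l}"
    then have s: "s < l" by simp
    have e: "- (2 * pi * real r * real s / real l) + 2 * pi * real r' * real s / real l
          = real s * (2 * pi * real_of_int (int r' - int r) / real l)"
      using l by (simp add: field_simps)
    have c: "complex_of_real (1 / sqrt (real l)) * complex_of_real (1 / sqrt (real l)) = complex_of_real (1 / real l)"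
      using l by (simp flip: of_real_mult)
    show "DFT l $$ (r,s) * mat_H (DFT l) $$ (s,r') =
        complex_of_real (1 / real l) * cis (2 * pi * real_of_int (int r' - int r) / real l) ^ s"
    proof -
      have "DFT l $$ (r,s) * mat_H (DFT l) $$ (s,r') =
        (complex_of_real (1 / sqrt (real l)) * complex_of_real (1 / sqrt (real l))) *
        (cis (- (2 * pi * real r * real s / real l)) * cis (2 * pi * real r' * real s / real l))"
        unfolding DFT_entry[OF r(1) s] mat_H_DFT_entry[OF r(2) s] by (simp only: mult_ac)
      also have "\<dots> = complex_of_real (1 / real l) * cis (real s * (2 * pi * real_of_int (int r' - int r) / real l))"
        unfolding cis_mult c e by (rule refl)
      also have "\<dots> = complex_of_real (1 / real l) * cis (2 * pi * real_of_int (int r' - int r) / real l) ^ s"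
        by (simp only: Complex.DeMoivre)
      finally show ?thesis .
    qed
  qed
  also have "\<dots> = complex_of_real (1 / real l) * (\<Sum>s<l. cis (2 * pi * real_of_int (int r' - int r) / real l) ^ s)"
    by (simp add: sum_distrib_left)
  also have "\<dots> = (if r = r' then 1 else 0)"
    using root_sum[OF l, of "int r' - int r"] r l by auto
  also have "\<dots> = 1\<^sub>m l $$ (r, r')" using r by simp
  finally show "(DFT l * mat_H (DFT l)) $$ (r, r') = 1\<^sub>m l $$ (r, r')" .
qed (auto simp: DFT_def mat_H_def)

lemma cmod_det_DFT: assumes "l > 0" shows "cmod (det (DFT l)) = 1"
proof -
  have "complex_of_real ((cmod (det (DFT l)))^2) = 1"
    using det_mult_H[OF DFT_carrier[of l]] DFT_unitary[OF assms] by simp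
  then have "(cmod (det (DFT l)))^2 = 1" by (metis of_real_eq_1_iff)
  then show ?thesis using norm_ge_zero[of "det (DFT l)"] by (auto simp: power2_eq_1_iff)
qed

lemma alpha_le: assumes "1 \<le> k" "k < n" shows "alpha n k \<le> k"
proof -
  have f: "\<lfloor>real (n - k) / 2\<rfloor> = int ((n - k) div 2)"
    using floor_divide_of_nat_eq[of "n - k" 2] by simp
  have "real n / 2 \<le> real_of_int (int ((n + 1) div 2))"
  proof -
    have "n \<le> 2 * ((n + 1) div 2)" by presburger
    then have "real n \<le> 2 * real ((n + 1) div 2)" by (metis of_nat_le_iff of_nat_mult of_nat_numeral)
    then show ?thesis by simp
  qed
  then have c: "\<lceil>real n / 2\<rceil> \<le> int ((n + 1) div 2)" by (rule ceiling_le)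
  have "(n + 1) div 2 \<le> k + (n - k) div 2" using assms by presburger
  then show ?thesis unfolding alpha_def f using c by linarith
qed

definition rho :: "nat \<Rightarrow> nat \<Rightarrow> nat \<Rightarrow> nat" where
  "rho n k c = (if c < alpha n k then c else c + n - k)"

lemma Sigma_entry: assumes "1 \<le> k" "k < n" "r < n" "c < k"
  shows "Sigma_mat n k $$ (r,c) = (if r = rho n k c then 1 else 0)"
  using assms alpha_le[OF assms(1,2)] unfolding Sigma_mat_def rho_def beta_def by auto

lemma rho_lt: assumes "1 \<le> k" "k < n" "c < k" shows "rho n k c < n"
  using assms unfolding rho_def by auto

lemma HS_entry: assumes "1 \<le> k" "k < n" "x < n" "c < k"
  shows "(mat_H (DFT n) * Sigma_mat n k) $$ (x,c) = mat_H (DFT n) $$ (x, rho n k c)"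
proof -
  have "(mat_H (DFT n) * Sigma_mat n k) $$ (x,c) = (\<Sum>r<n. mat_H (DFT n) $$ (x,r) * Sigma_mat n k $$ (r,c))"
    using assms mat_H_carrier[OF DFT_carrier[of n]] by (simp add: scalar_prod_def atLeast0LessThan Sigma_mat_def)
  also have "\<dots> = (\<Sum>r<n. if r = rho n k c then mat_H (DFT n) $$ (x,r) else 0)"
    using assms by (intro sum.cong) (auto simp: Sigma_entry)
  also have "\<dots> = mat_H (DFT n) $$ (x, rho n k c)" using rho_lt[OF assms(1,2,4)] by simp
  finally show ?thesis .
qed


definition sig :: "nat \<Rightarrow> nat \<Rightarrow> nat \<Rightarrow> nat" where
  "sig n k c = (if c < alpha n k then c + beta n k else if c < k then c - alpha n k else c)"

lemma sig_permutes: assumes "1 \<le> k" "k < n" shows "sig n k permutes {0..<k}"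
proof (rule bij_imp_permutes)
  have ab: "alpha n k + beta n k = k" using alpha_le[OF assms] by (simp add: beta_def)
  define tau where "tau c = (if c < beta n k then c + alpha n k else c - beta n k)" for c
  show "bij_betw (sig n k) {0..<k} {0..<k}"
    by (rule bij_betw_byWitness[where f' = tau]) (use ab alpha_le[OF assms] in \<open>auto simp: sig_def tau_def\<close>)
  show "\<And>x. x \<notin> {0..<k} \<Longrightarrow> sig n k x = x" using alpha_le[OF assms] by (auto simp: sig_def)
qed

lemma cmod_cis_diff: "(cmod (cis a - cis b))^2 = 4 * (sin ((a - b) / 2))^2"
proof -
  have "(cmod (cis a - cis b))^2 = (cos a - cos b)^2 + (sin a - sin b)^2"
    by (simp add: cmod_power2)
  also have "\<dots> = 2 - 2 * cos (a - b)"
    by (simp add: cos_diff power2_eq_square algebra_simps)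
  also have "cos (a - b) = 1 - 2 * (sin ((a - b) / 2))^2"
  proof -
    have "cos (a - b) = cos (2 * ((a - b) / 2))" by (rule arg_cong[where f=cos]) simp
    then show ?thesis by (simp only: cos_double_sin)
  qed
  finally show ?thesis by simp
qed

context
  fixes n k :: nat and rs :: "nat list"
  assumes k1: "1 \<le> k" and kn: "k < n" and len: "length rs = k" and rsn: "set rs \<subseteq> {..<n}"
begin

definition Em :: "complex mat" where
  "Em = Matrix.mat k k (\<lambda>(i,c). complex_of_real (1 / sqrt (real n)) *
      cis (2 * pi * real (rho n k c) * real (rs ! i) / real n))"

definition Fm :: "complex mat" where
  "Fm = Matrix.mat k k (\<lambda>(i,c). complex_of_real (1 / sqrt (real n)) *
      cis (2 * pi * real (c + n - beta n k) * real (rs ! i) / real n))"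

lemma rs_lt: "i < k \<Longrightarrow> rs ! i < n"
  using rsn len by (auto simp: set_conv_nth)

lemma Gk_eq: "row_submat (G_mat n k) rs = complex_of_real (sqrt (real n / real k)) \<cdot>\<^sub>m (Em * DFT k)"
proof (rule eq_matI)
  have Hc: "mat_H (DFT n) \<in> carrier_mat n n" by (rule mat_H_carrier[OF DFT_carrier])
  have Sc: "Sigma_mat n k \<in> carrier_mat n k" by (simp add: Sigma_mat_def)
  fix i s assume "i < dim_row (complex_of_real (sqrt (real n / real k)) \<cdot>\<^sub>m (Em * DFT k))"
    "s < dim_col (complex_of_real (sqrt (real n / real k)) \<cdot>\<^sub>m (Em * DFT k))"
  then have i: "i < k" and s: "s < k" by (auto simp: Em_def)
  have x: "rs ! i < n" by (rule rs_lt[OF i])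
  have "row_submat (G_mat n k) rs $$ (i, s) = G_mat n k $$ (rs ! i, s)"
    using i s len Hc Sc by (simp add: row_submat_def G_mat_def)
  also have "\<dots> = complex_of_real (sqrt (real n / real k)) *
      (\<Sum>c<k. (mat_H (DFT n) * Sigma_mat n k) $$ (rs ! i, c) * DFT k $$ (c, s))"
    using x s Hc Sc by (simp add: G_mat_def scalar_prod_def atLeast0LessThan)
  also have "\<dots> = complex_of_real (sqrt (real n / real k)) * (\<Sum>c<k. Em $$ (i, c) * DFT k $$ (c, s))"
  proof -
    have "(mat_H (DFT n) * Sigma_mat n k) $$ (rs ! i, c) = Em $$ (i, c)" if c: "c < k" for c
      unfolding HS_entry[OF k1 kn x c] mat_H_DFT_entry[OF rho_lt[OF k1 kn c] x]
      using i c by (simp add: Em_def)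
    then show ?thesis by simp
  qed
  also have "\<dots> = (complex_of_real (sqrt (real n / real k)) \<cdot>\<^sub>m (Em * DFT k)) $$ (i, s)"
    using i s by (simp add: Em_def scalar_prod_def atLeast0LessThan)
  finally show "row_submat (G_mat n k) rs $$ (i, s) = (complex_of_real (sqrt (real n / real k)) \<cdot>\<^sub>m (Em * DFT k)) $$ (i, s)" .
qed (auto simp: row_submat_def G_mat_def Em_def len mat_H_def Sigma_mat_def)

lemma Em_carrier: "Em \<in> carrier_mat k k" by (simp add: Em_def)
lemma Fm_carrier: "Fm \<in> carrier_mat k k" by (simp add: Fm_def)

lemma Em_Fm: assumes i: "i < k" and c: "c < k" shows "Em $$ (i, c) = Fm $$ (i, sig n k c)"
proof -
  have ab: "alpha n k + beta n k = k" using alpha_le[OF k1 kn] by (simp add: beta_def)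
  have sc: "sig n k c < k" using c ab by (auto simp: sig_def)
  show ?thesis
  proof (cases "c < alpha n k")
    case True
    have e: "sig n k c + n - beta n k = c + n" using True by (simp add: sig_def)
    have "2 * pi * real (c + n) * real (rs ! i) / real n = 2 * pi * real c * real (rs ! i) / real n + 2 * pi * real (rs ! i)"
      using kn by (simp add: field_simps)
    then have "cis (2 * pi * real (c + n) * real (rs ! i) / real n) = cis (2 * pi * real c * real (rs ! i) / real n)"
      by (simp add: cis_mult[symmetric] cis_2pi_nat)
    then show ?thesis using i c sc True e by (simp add: Em_def Fm_def rho_def)
  next
    case False
    have e: "sig n k c + n - beta n k = c + n - k" using False c ab kn by (simp add: sig_def)
    then show ?thesis using i c sc False by (simp add: Em_def Fm_def rho_def)
  qed
qed

lemma det_Em: "det Em = of_int (sign (sig n k)) * det Fm"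
proof -
  have "transpose_mat Em = Matrix.mat k k (\<lambda>(c, i). transpose_mat Fm $$ (sig n k c, i))"
  proof (rule eq_matI)
    fix c i assume "c < dim_row (Matrix.mat k k (\<lambda>(c, i). transpose_mat Fm $$ (sig n k c, i)))"
      "i < dim_col (Matrix.mat k k (\<lambda>(c, i). transpose_mat Fm $$ (sig n k c, i)))"
    then have c: "c < k" and i: "i < k" by auto
    have sc: "sig n k c < k" using permutes_in_image[OF sig_permutes[OF k1 kn], of c] c by simp
    show "transpose_mat Em $$ (c, i) = Matrix.mat k k (\<lambda>(c, i). transpose_mat Fm $$ (sig n k c, i)) $$ (c, i)"
      using c i sc Em_Fm[OF i c] by (simp add: Em_def Fm_def)
  qed (auto simp: Em_def)
  then have "det Em = det (Matrix.mat k k (\<lambda>(c, i). transpose_mat Fm $$ (sig n k c, i)))"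
    using det_transpose[OF Em_carrier] by simp
  also have "\<dots> = of_int (sign (sig n k)) * det (transpose_mat Fm)"
    by (rule det_permute_rows) (use Fm_carrier sig_permutes[OF k1 kn] in auto)
  also have "\<dots> = of_int (sign (sig n k)) * det Fm" using det_transpose[OF Fm_carrier] by simp
  finally show ?thesis .
qed

definition zz :: "nat \<Rightarrow> complex" where "zz i = cis (2 * pi * real (rs ! i) / real n)"
definition uu :: "nat \<Rightarrow> complex" where
  "uu i = complex_of_real (1 / sqrt (real n)) * cis (2 * pi * real (n - beta n k) * real (rs ! i) / real n)"

lemma det_Fm: "det Fm = prod uu {0..<k} * det (vdm k zz)"
proof -
  define a where "a = (\<lambda>i. Matrix.vec k (\<lambda>c. zz i ^ c))"
  have bn: "beta n k \<le> n" using kn by (simp add: beta_def)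
  have "Fm = mat\<^sub>r k k (\<lambda>i. uu i \<cdot>\<^sub>v a i)"
  proof (rule eq_matI)
    fix i c assume "i < dim_row (mat\<^sub>r k k (\<lambda>i. uu i \<cdot>\<^sub>v a i))" "c < dim_col (mat\<^sub>r k k (\<lambda>i. uu i \<cdot>\<^sub>v a i))"
    then have i: "i < k" and c: "c < k" by auto
    have e: "2 * pi * real (n - beta n k) * real (rs ! i) / real n + real c * (2 * pi * real (rs ! i) / real n)
        = 2 * pi * real (c + n - beta n k) * real (rs ! i) / real n"
      using bn kn by (simp add: of_nat_diff field_simps)
    have "uu i * zz i ^ c = complex_of_real (1 / sqrt (real n)) * (cis (2 * pi * real (n - beta n k) * real (rs ! i) / real n) * cis (real c * (2 * pi * real (rs ! i) / real n)))"
      unfolding uu_def zz_def Complex.DeMoivre by (simp only: mult_ac)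
    also have "\<dots> = complex_of_real (1 / sqrt (real n)) * cis (2 * pi * real (c + n - beta n k) * real (rs ! i) / real n)"
      unfolding cis_mult e by (rule refl)
    finally have "uu i * zz i ^ c = complex_of_real (1 / sqrt (real n)) * cis (2 * pi * real (c + n - beta n k) * real (rs ! i) / real n)" .
    then show "Fm $$ (i, c) = mat\<^sub>r k k (\<lambda>i. uu i \<cdot>\<^sub>v a i) $$ (i, c)"
      using i c by (simp add: Fm_def a_def)
  qed (auto simp: Fm_def)
  moreover have "mat\<^sub>r k k a = vdm k zz" by (rule eq_matI) (auto simp: a_def vdm_def)
  moreover have "a \<in> {0..<k} \<rightarrow> carrier_vec k" by (auto simp: a_def)
  ultimately show ?thesis using det_rows_mul[of a k uu] by simp
qed

lemma cmod_det_Gk: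
  "cmod (det (row_submat (G_mat n k) rs)) =
     sqrt (real n / real k) ^ k * (1 / sqrt (real n)) ^ k * (\<Prod>j<k. \<Prod>i<j. cmod (zz j - zz i))"
proof -
  have sg: "cmod (of_int (sign (sig n k))) = 1"
    by (auto simp: sign_def)
  have uu: "cmod (uu i) = 1 / sqrt (real n)" for i
    by (simp add: uu_def norm_mult norm_divide)
  have "cmod (det (row_submat (G_mat n k) rs)) =
      cmod (complex_of_real (sqrt (real n / real k)) ^ k * (det Em * det (DFT k)))"
    unfolding Gk_eq using Em_carrier DFT_carrier[of k] by (simp add: det_mult)
  also have "\<dots> = sqrt (real n / real k) ^ k * cmod (det Em)"
    using cmod_det_DFT[of k] k1 by (simp add: norm_mult norm_power)
  also have "cmod (det Em) = (1 / sqrt (real n)) ^ k * (\<Prod>j<k. \<Prod>i<j. cmod (zz j - zz i))"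
    unfolding det_Em det_Fm det_vdm norm_mult sg
    by (simp add: prod_norm[symmetric] uu)
  finally show ?thesis by simp
qed

lemma D_formula:
  "det (row_submat (G_mat n k) rs * mat_H (row_submat (G_mat n k) rs)) =
   complex_of_real ((1 / real k) ^ k *
     (\<Prod>j<k. \<Prod>i<j. 4 * (sin (pi * (real (rs ! j) - real (rs ! i)) / real n))^2))"
proof -
  have c: "row_submat (G_mat n k) rs \<in> carrier_mat k k"
    by (simp add: row_submat_def G_mat_def len Sigma_mat_def)
  have z: "(cmod (zz j - zz i))^2 = 4 * (sin (pi * (real (rs ! j) - real (rs ! i)) / real n))^2" for i j
  proof -
    have "(2 * pi * real (rs ! j) / real n - 2 * pi * real (rs ! i) / real n) / 2 =
        pi * (real (rs ! j) - real (rs ! i)) / real n"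
      using kn by (simp add: field_simps)
    then show ?thesis unfolding zz_def cmod_cis_diff by simp
  qed
  have p: "(sqrt (real n / real k) ^ k * (1 / sqrt (real n)) ^ k)^2 = (1 / real k) ^ k"
  proof -
    have h: "sqrt (real n / real k) * (1 / sqrt (real n)) = 1 / sqrt (real k)"
      using kn by (simp add: real_sqrt_divide field_simps)
    have "(sqrt (real n / real k) ^ k * (1 / sqrt (real n)) ^ k)^2 = ((1 / sqrt (real k)) ^ k)^2"
      unfolding power_mult_distrib[symmetric] h by (rule refl)
    also have "\<dots> = ((1 / sqrt (real k))^2) ^ k" by (simp only: power_mult[symmetric] mult.commute)
    also have "\<dots> = (1 / real k) ^ k" by (simp add: power_divide)
    finally show ?thesis .
  qed
  have "(cmod (det (row_submat (G_mat n k) rs)))^2 = (1 / real k) ^ k *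
     (\<Prod>j<k. \<Prod>i<j. 4 * (sin (pi * (real (rs ! j) - real (rs ! i)) / real n))^2)"
  proof -
    have "(cmod (det (row_submat (G_mat n k) rs)))^2 = (sqrt (real n / real k) ^ k * (1 / sqrt (real n)) ^ k)^2 *
       (\<Prod>j<k. \<Prod>i<j. cmod (zz j - zz i))^2"
      unfolding cmod_det_Gk by (rule power_mult_distrib)
    then show ?thesis unfolding p by (simp add: prod_power_distrib z)
  qed
  then show ?thesis unfolding det_mult_H[OF c] by simp
qed

end



definition phi :: "nat \<Rightarrow> real \<Rightarrow> real" where
  "phi n t = ln ((sin (pi * t / real n))^2)"

lemma phi_even: "phi n (- t) = phi n t"
  by (simp add: phi_def)

lemma sin_int_pi: "sin (real_of_int z * pi) = 0"
  using sin_zero_iff_int2 by blast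

lemma sin_sq_shift: "(sin (x + real_of_int z * pi))^2 = (sin x)^2"
proof -
  have "(cos (real_of_int z * pi))^2 = 1" using sin_squared_eq[of "real_of_int z * pi"] sin_int_pi[of z] by simp
  then show ?thesis by (simp add: sin_add sin_int_pi power_mult_distrib)
qed

lemma phi_per: assumes "n > 0" shows "phi n (t + real n * real_of_int z) = phi n t"
proof -
  have "pi * (t + real n * real_of_int z) / real n = pi * t / real n + real_of_int z * pi"
    using assms by (simp add: field_simps)
  then show ?thesis unfolding phi_def by (simp add: sin_sq_shift)
qed

lemma sin_nz: assumes "n > 0" "0 < \<bar>d\<bar>" "\<bar>d\<bar> < real n" shows "sin (pi * d / real n) \<noteq> 0"
proof
  assume "sin (pi * d / real n) = 0"
  then obtain i :: int where i: "pi * d / real n = real_of_int i * pi" using sin_zero_iff_int2 by blast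
  then have d: "d = real_of_int i * real n" using assms(1) by (simp add: field_simps)
  show False
  proof (cases "i = 0")
    case True then show False using d assms by simp
  next
    case False
    then have "\<bar>real_of_int i\<bar> \<ge> 1" by linarith
    then have "\<bar>real_of_int i\<bar> * real n \<ge> real n" using assms(1) by simp
    then show False using d assms(3) by (simp add: abs_mult)
  qed
qed

lemma cot_mono: assumes "0 < u" "u \<le> v" "v < pi" shows "cos v / sin v \<le> cos u / sin u"
proof -
  have su: "sin u > 0" using assms by (intro sin_gt_zero) auto
  have sv: "sin v > 0" using assms by (intro sin_gt_zero) auto
  have "0 \<le> sin (v - u)" using assms by (intro sin_ge_zero) auto
  then have "cos v * sin u \<le> cos u * sin v" by (simp add: sin_diff algebra_simps)
  then show ?thesis using su sv by (simp add: field_simps)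
qed

lemma concave_phi: assumes "n > 0" shows "convex_on {0<..<real n} (\<lambda>t. - phi n t)"
proof (rule convex_on_realI)
  show "connected {0<..<real n}" by simp
  fix x assume x: "x \<in> {0<..<real n}"
  have s: "sin (pi * x / real n) > 0" using x assms by (intro sin_gt_zero) (auto simp: field_simps)
  show "((\<lambda>t. - phi n t) has_real_derivative
      (- (2 * (pi / real n) * (cos (pi * x / real n) / sin (pi * x / real n))))) (at x)"
    unfolding phi_def using s
    by (auto intro!: derivative_eq_intros simp: field_simps power2_eq_square)
next
  fix x y assume x: "x \<in> {0<..<real n}" and y: "y \<in> {0<..<real n}" and xy: "x \<le> y"
  have "cos (pi * y / real n) / sin (pi * y / real n) \<le> cos (pi * x / real n) / sin (pi * x / real n)"
    using x y xy assms by (intro cot_mono) (auto simp: field_simps)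
  then have "2 * (pi / real n) * (cos (pi * y / real n) / sin (pi * y / real n)) \<le>
     2 * (pi / real n) * (cos (pi * x / real n) / sin (pi * x / real n))"
    by (rule mult_left_mono) simp
  then show "- (2 * (pi / real n) * (cos (pi * x / real n) / sin (pi * x / real n))) \<le>
     - (2 * (pi / real n) * (cos (pi * y / real n) / sin (pi * y / real n)))"
    by linarith
qed

lemma chord: assumes n: "n > 0" and a: "0 < a" and ab: "a < b" and b: "b < real n"
  and d: "a \<le> d" "d \<le> b"
  shows "((b - d) * phi n a + (d - a) * phi n b) / (b - a) \<le> phi n d"
proof -
  define t where "t = (d - a) / (b - a)"
  have t: "0 \<le> t" "t \<le> 1" using d ab by (auto simp: t_def field_simps)
  have "(\<lambda>t. - phi n t) ((1 - t) *\<^sub>R a + t *\<^sub>R b) \<le> (1 - t) * (- phi n a) + t * (- phi n b)"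
    by (rule convex_onD[OF concave_phi[OF n] t]) (use a ab b in auto)
  moreover have "(1 - t) *\<^sub>R a + t *\<^sub>R b = d"
  proof -
    have "(1 - t) *\<^sub>R a + t *\<^sub>R b = a + t * (b - a)" by (simp add: algebra_simps)
    also have "t * (b - a) = d - a" using ab by (simp add: t_def)
    finally show ?thesis by simp
  qed
  ultimately have "(1 - t) * phi n a + t * phi n b \<le> phi n d" by simp
  moreover have "(1 - t) * phi n a + t * phi n b = ((b - d) * phi n a + (d - a) * phi n b) / (b - a)"
  proof -
    have h: "1 - t = (b - d) / (b - a)" using ab by (simp add: t_def field_simps)
    show ?thesis unfolding h by (simp add: t_def add_divide_distrib)
  qed
  ultimately show ?thesis by simp
qed

lemma chord_sum:
  assumes n: "n > 0" and a: "0 < a" and ab: "a < b" and b: "b < real n"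
  and fin: "finite I" and bnd: "\<And>i. i \<in> I \<Longrightarrow> a \<le> d i \<and> d i \<le> b"
  shows "((real (card I) * b - sum d I) * phi n a + (sum d I - real (card I) * a) * phi n b) / (b - a)
         \<le> (\<Sum>i\<in>I. phi n (d i))"
proof -
  have "(\<Sum>i\<in>I. ((b - d i) * phi n a + (d i - a) * phi n b) / (b - a)) \<le> (\<Sum>i\<in>I. phi n (d i))"
    by (rule sum_mono) (use bnd in \<open>auto intro!: chord[OF n a ab b]\<close>)
  moreover have "(\<Sum>i\<in>I. ((b - d i) * phi n a + (d i - a) * phi n b) / (b - a)) =
     ((real (card I) * b - sum d I) * phi n a + (sum d I - real (card I) * a) * phi n b) / (b - a)"
    by (simp add: sum_divide_distrib[symmetric] sum.distrib sum_distrib_right[symmetric] sum_subtractf)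
  ultimately show ?thesis by simp
qed


lemma gap: assumes s: "sorted_wrt (<) ys" and ij: "i \<le> j" and j: "j < length ys"
  shows "ys ! i + (j - i) \<le> ys ! j"
proof -
  have "j < length ys \<longrightarrow> ys ! i + (j - i) \<le> ys ! j" using ij
  proof (induction j rule: dec_induct)
    case base then show ?case by simp
  next
    case (step q)
    show ?case
    proof
      assume q: "Suc q < length ys"
      then have "ys ! i + (q - i) \<le> ys ! q" using step by simp
      moreover have "ys ! q < ys ! Suc q" using sorted_wrt_nth_less[OF s, of q "Suc q"] q by simp
      ultimately show "ys ! i + (Suc q - i) \<le> ys ! Suc q" using step(1) by simp
    qed
  qed
  then show ?thesis using j by simp
qed

lemma pairs_sym: fixes K :: nat shows "(\<Sum>i<K. \<Sum>j\<in>{..<K}-{i}. h i j) = (\<Sum>j<K. \<Sum>i<j. (h i j + h j i :: real))"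
proof (induction K)
  case 0 then show ?case by simp
next
  case (Suc K)
  have "(\<Sum>i<Suc K. \<Sum>j\<in>{..<Suc K}-{i}. h i j) = (\<Sum>i<K. \<Sum>j\<in>{..<Suc K}-{i}. h i j) + (\<Sum>j\<in>{..<Suc K}-{K}. h K j)"
    by simp
  also have "(\<Sum>i<K. \<Sum>j\<in>{..<Suc K}-{i}. h i j) = (\<Sum>i<K. (\<Sum>j\<in>{..<K}-{i}. h i j) + h i K)"
  proof (intro sum.cong refl)
    fix i assume i: "i \<in> {..<K}"
    have "{..<Suc K}-{i} = insert K ({..<K}-{i})" using i by auto
    then show "(\<Sum>j\<in>{..<Suc K}-{i}. h i j) = (\<Sum>j\<in>{..<K}-{i}. h i j) + h i K" by simp
  qed
  also have "{..<Suc K}-{K} = {..<K}" by auto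
  finally show ?case using Suc.IH by (simp add: sum.distrib)
qed

lemma list_set_sum: assumes "distinct xs"
  shows "(\<Sum>i<length xs. \<Sum>j\<in>{..<length xs}-{i}. g (xs!i) (xs!j)) = (\<Sum>a\<in>set xs. \<Sum>b\<in>set xs - {a}. g a b)"
proof -
  have inj: "inj_on (nth xs) {..<length xs}" using assms by (simp add: inj_on_def nth_eq_iff_index_eq)
  have st: "set xs = nth xs ` {..<length xs}" by (auto simp: set_conv_nth)
  have "(\<Sum>a\<in>set xs. \<Sum>b\<in>set xs - {a}. g a b) = (\<Sum>i<length xs. \<Sum>b\<in>set xs - {xs!i}. g (xs!i) b)"
    unfolding st by (rule sum.reindex[OF inj, unfolded comp_def])
  also have "\<dots> = (\<Sum>i<length xs. \<Sum>j\<in>{..<length xs}-{i}. g (xs!i) (xs!j))"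
  proof (intro sum.cong refl)
    fix i assume i: "i \<in> {..<length xs}"
    have inj2: "inj_on (nth xs) ({..<length xs}-{i})" using inj by (rule inj_on_subset) auto
    have "set xs - {xs!i} = nth xs ` ({..<length xs}-{i})"
      unfolding st using inj i by (auto simp: inj_on_def)
    then show "(\<Sum>b\<in>set xs - {xs!i}. g (xs!i) b) = (\<Sum>j\<in>{..<length xs}-{i}. g (xs!i) (xs!j))"
      using sum.reindex[OF inj2, of "g (xs!i)"] by simp
  qed
  finally show ?thesis by simp
qed

context
  fixes n k m :: nat and ys :: "nat list"
  assumes srt: "sorted_wrt (<) ys" and len: "length ys = k" and yn: "set ys \<subseteq> {..<n}"
    and m1: "1 \<le> m" and mk: "m < k" and kn: "k < n"
begin

definition nx :: "nat \<Rightarrow> nat" where "nx i = (if i + m < k then i + m else i + m - k)"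
definition dd :: "nat \<Rightarrow> real" where
  "dd i = real (ys ! nx i) - real (ys ! i) + (if i + m < k then 0 else real n)"

lemma ys_lt: "i < k \<Longrightarrow> ys ! i < n"
  using yn len by (auto simp: set_conv_nth)

lemma ys_ge: "i < k \<Longrightarrow> i \<le> ys ! i"
  using gap[OF srt, of 0 i] len by simp

lemma ys_le: "i < k \<Longrightarrow> ys ! i + k \<le> n + i"
proof -
  assume i: "i < k"
  have "ys ! i + (k - 1 - i) \<le> ys ! (k - 1)" using gap[OF srt, of i "k - 1"] len i by simp
  moreover have "ys ! (k - 1) < n" using ys_lt[of "k - 1"] i by simp
  ultimately show ?thesis using i by simp
qed

lemma dd_bounds: assumes i: "i < k" shows "real m \<le> dd i \<and> dd i \<le> real n - real k + real m"
proof (cases "i + m < k")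
  case True
  have A: "ys ! i + m \<le> ys ! (i + m)" using gap[OF srt, of i "i + m"] True len by simp
  have B: "ys ! (i + m) + k \<le> n + (i + m)" using ys_le[OF True] .
  have C: "i \<le> ys ! i" using ys_ge[OF i] .
  have A': "real (ys ! i) + real m \<le> real (ys ! (i + m))" using of_nat_mono[where 'a=real, OF A] by simp
  have B': "real (ys ! (i + m)) + real k \<le> real n + real i + real m" using of_nat_mono[where 'a=real, OF B] by simp
  have C': "real i \<le> real (ys ! i)" using of_nat_mono[where 'a=real, OF C] by simp
  show ?thesis using A' B' C' True by (simp add: dd_def nx_def)
next
  case False
  define j where "j = i + m - k"
  have j: "j < i" "i - j = k - m" using False mk by (auto simp: j_def)
  have A: "ys ! j + (k - m) \<le> ys ! i" using gap[OF srt, of j i] j i len by simp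
  have B: "ys ! i + k \<le> n + i" using ys_le[OF i] .
  have C: "j \<le> ys ! j" using ys_ge[of j] j i by simp
  have A': "real (ys ! j) + real k - real m \<le> real (ys ! i)" using of_nat_mono[where 'a=real, OF A] mk by (simp add: of_nat_diff)
  have B': "real (ys ! i) + real k \<le> real n + real i" using of_nat_mono[where 'a=real, OF B] by simp
  have C': "real i + real m - real k \<le> real (ys ! j)" using of_nat_mono[where 'a=real, OF C] False by (simp add: j_def of_nat_diff)
  have "nx i = j" using False by (simp add: nx_def j_def)
  then show ?thesis using A' B' C' False by (simp add: dd_def)
qed

lemma nx_bij: "bij_betw nx {..<k} {..<k}"
  by (rule bij_betw_byWitness[where f' = "\<lambda>j. if m \<le> j then j - m else j + k - m"])
     (use mk in \<open>auto simp: nx_def\<close>)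

lemma dd_sum: "(\<Sum>i<k. dd i) = real m * real n"
proof -
  have r: "(\<Sum>i<k. real (ys ! nx i)) = (\<Sum>i<k. real (ys ! i))"
    using sum.reindex[OF bij_betw_imp_inj_on[OF nx_bij], of "\<lambda>i. real (ys ! i)"]
      bij_betw_imp_surj_on[OF nx_bij] by (simp add: comp_def)
  have s: "(\<Sum>i<k. (if i + m < k then 0 else real n)) = real m * real n"
  proof -
    have "(\<Sum>i<k. (if i + m < k then 0 else real n)) = (\<Sum>i\<in>{k - m..<k}. real n)"
      by (rule sum.mono_neutral_cong_right) auto
    then show ?thesis using mk by simp
  qed
  show ?thesis unfolding dd_def using r s by (simp add: sum.distrib sum_subtractf)
qed

lemma window_bound:
  "real (k - m) * phi n (real m) + real m * phi n (real n - real k + real m) \<le> (\<Sum>i<k. phi n (dd i))"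
proof -
  have n0: "n > 0" using kn by simp
  have "((real (card {..<k}) * (real n - real k + real m) - sum dd {..<k}) * phi n (real m) +
        (sum dd {..<k} - real (card {..<k}) * real m) * phi n (real n - real k + real m)) /
        ((real n - real k + real m) - real m) \<le> (\<Sum>i<k. phi n (dd i))"
    by (rule chord_sum[OF n0]) (use m1 mk kn dd_bounds in auto)
  moreover have "((real (card {..<k}) * (real n - real k + real m) - sum dd {..<k}) * phi n (real m) +
        (sum dd {..<k} - real (card {..<k}) * real m) * phi n (real n - real k + real m)) /
        ((real n - real k + real m) - real m) =
      real (k - m) * phi n (real m) + real m * phi n (real n - real k + real m)"
  proof -
    have nk: "real n - real k \<noteq> 0" using kn by simp
    have e1: "real k * (real n - real k + real m) - real m * real n = (real k - real m) * (real n - real k)"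
      by (simp add: algebra_simps)
    have e2: "real m * real n - real k * real m = real m * (real n - real k)"
      by (simp add: algebra_simps)
    show ?thesis unfolding dd_sum card_lessThan e1 e2 using nk mk
      by (simp add: of_nat_diff field_simps)
  qed
  ultimately show ?thesis by simp
qed


lemma window_bound':
  "real (k - m) * phi n (real m) + real m * phi n (real n - real k + real m) \<le>
   (\<Sum>i<k. phi n (real (ys ! (if i + m < k then i + m else i + m - k)) - real (ys ! i)))"
proof -
  have "phi n (dd i) = phi n (real (ys ! (if i + m < k then i + m else i + m - k)) - real (ys ! i))" for i
  proof (cases "i + m < k")
    case True then show ?thesis by (simp add: dd_def nx_def)
  next
    case False
    have "phi n (dd i) = phi n ((real (ys ! nx i) - real (ys ! i)) + real n * real_of_int 1)"
      using False by (simp add: dd_def)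
    also have "\<dots> = phi n (real (ys ! nx i) - real (ys ! i))" by (rule phi_per) (use kn in simp)
    finally show ?thesis using False by (simp add: nx_def)
  qed
  then show ?thesis using window_bound by simp
qed

end

lemma T_windows: fixes k :: nat and n :: nat and ys :: "nat list" shows
  "(\<Sum>i<k. \<Sum>j\<in>{..<k}-{i}. phi n (real (ys ! j) - real (ys ! i))) = (\<Sum>i<k. \<Sum>m'\<in>{1..<k}. phi n (real (ys ! (if i + m' < k then i + m' else i + m' - k)) - real (ys ! i)))"
proof (rule sum.cong[OF refl])
  fix i assume i: "i \<in> {..<k}"
  show "(\<Sum>j\<in>{..<k}-{i}. phi n (real (ys ! j) - real (ys ! i))) = (\<Sum>m'\<in>{1..<k}. phi n (real (ys ! (if i + m' < k then i + m' else i + m' - k)) - real (ys ! i)))"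
    by (rule sum.reindex_bij_witness[where i = "\<lambda>m'. if i + m' < k then i + m' else i + m' - k"
          and j = "\<lambda>j. if i < j then j - i else j + k - i"]) (use i in auto)
qed


lemma sumpair_nat: fixes K :: nat shows
  "(\<Sum>j<K. \<Sum>i<j. g (real j - real i)) = (\<Sum>r\<in>{1..<K}. real (K - r) * g (real r))"
proof (induction K)
  case 0 then show ?case by simp
next
  case (Suc K)
  have a: "(\<Sum>i<K. g (real K - real i)) = (\<Sum>r\<in>{1..<Suc K}. g (real r))"
    by (rule sum.reindex_bij_witness[where i = "\<lambda>r. K - r" and j = "\<lambda>i. K - i"]) (auto simp: of_nat_diff)
  have b: "(\<Sum>r\<in>{1..<Suc K}. real (Suc K - r) * g (real r)) =
      (\<Sum>r\<in>{1..<Suc K}. real (K - r) * g (real r)) + (\<Sum>r\<in>{1..<Suc K}. g (real r))"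
    unfolding sum.distrib[symmetric] by (rule sum.cong) (auto simp: Suc_diff_le algebra_simps)
  have c: "(\<Sum>r\<in>{1..<Suc K}. real (K - r) * g (real r)) = (\<Sum>r\<in>{1..<K}. real (K - r) * g (real r))"
    by (rule sum.mono_neutral_right) auto
  show ?case using Suc.IH a b c by simp
qed

definition Pp :: "nat \<Rightarrow> nat \<Rightarrow> nat list \<Rightarrow> real" where
  "Pp n k xs = (\<Prod>j<k. \<Prod>i<j. (sin (pi * (real (xs ! j) - real (xs ! i)) / real n))^2)"

definition Qq :: "nat \<Rightarrow> nat \<Rightarrow> real" where
  "Qq n k = (\<Prod>r = 1..k - 1. (sin (pi * real r / real n) ^ 2) ^ (k - r))"

definition TT :: "nat \<Rightarrow> nat set \<Rightarrow> real" where
  "TT n S = (\<Sum>a\<in>S. \<Sum>b\<in>S - {a}. phi n (real b - real a))"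

lemma list_T: assumes "distinct xs" "length xs = k"
  shows "TT n (set xs) = 2 * (\<Sum>j<k. \<Sum>i<j. phi n (real (xs ! j) - real (xs ! i)))"
proof -
  have "TT n (set xs) = (\<Sum>i<k. \<Sum>j\<in>{..<k}-{i}. phi n (real (xs ! j) - real (xs ! i)))"
    unfolding TT_def using list_set_sum[OF assms(1), of "\<lambda>a b. phi n (real b - real a)"] assms(2) by simp
  also have "\<dots> = (\<Sum>j<k. \<Sum>i<j. (phi n (real (xs ! j) - real (xs ! i)) + phi n (real (xs ! i) - real (xs ! j))))"
    by (rule pairs_sym)
  also have "\<dots> = (\<Sum>j<k. \<Sum>i<j. 2 * phi n (real (xs ! j) - real (xs ! i)))"
    using phi_even[of n "real (xs ! j) - real (xs ! i)" for i j] by simp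
  finally show ?thesis by (simp add: sum_distrib_left)
qed

lemma Pp_ln: assumes n: "n > 0" and d: "distinct xs" and l: "length xs = k" and s: "set xs \<subseteq> {..<n}"
  shows "Pp n k xs > 0 \<and> 2 * ln (Pp n k xs) = TT n (set xs)"
proof -
  have pos: "(sin (pi * (real (xs ! j) - real (xs ! i)) / real n))^2 > 0" if "i < j" "j < k" for i j
  proof -
    have "xs ! i \<noteq> xs ! j" using d l that by (simp add: nth_eq_iff_index_eq)
    moreover have "xs ! i \<in> set xs" "xs ! j \<in> set xs" using l that by auto
    then have "xs ! i < n" "xs ! j < n" using s by auto
    ultimately have "sin (pi * (real (xs ! j) - real (xs ! i)) / real n) \<noteq> 0"
      by (intro sin_nz[OF n]) auto
    then show ?thesis by simp
  qed
  have pp: "(\<Prod>i<j. (sin (pi * (real (xs ! j) - real (xs ! i)) / real n))^2) > 0" if "j < k" for j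
    using pos that by (intro prod_pos) auto
  have P: "Pp n k xs > 0" unfolding Pp_def by (rule prod_pos) (metis lessThan_iff pp)
  have "ln (Pp n k xs) = (\<Sum>j<k. ln (\<Prod>i<j. (sin (pi * (real (xs ! j) - real (xs ! i)) / real n))^2))"
  proof -
    have ppn: "\<And>j. j \<in> {..<k} \<Longrightarrow> (\<Prod>i<j. (sin (pi * (real (xs ! j) - real (xs ! i)) / real n))^2) \<noteq> 0"
      using pp by (metis lessThan_iff less_irrefl)
    show ?thesis unfolding Pp_def by (rule ln_prod[OF finite_lessThan ppn])
  qed
  also have "\<dots> = (\<Sum>j<k. \<Sum>i<j. phi n (real (xs ! j) - real (xs ! i)))"
  proof (rule sum.cong[OF refl])
    fix j assume j: "j \<in> {..<k}"
    show "ln (\<Prod>i<j. (sin (pi * (real (xs ! j) - real (xs ! i)) / real n))^2) = (\<Sum>i<j. phi n (real (xs ! j) - real (xs ! i)))"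
    proof -
      have posn: "\<And>i. i \<in> {..<j} \<Longrightarrow> (sin (pi * (real (xs ! j) - real (xs ! i)) / real n))^2 \<noteq> 0"
        using pos j by (metis lessThan_iff less_irrefl)
      show ?thesis unfolding phi_def by (rule ln_prod[OF finite_lessThan posn])
    qed
  qed
  finally show ?thesis using P list_T[OF d l, of n] by simp
qed

lemma TT_lower: assumes S: "S \<subseteq> {..<n}" and c: "card S = k" and k1: "1 \<le> k" and kn: "k < n"
  shows "2 * (\<Sum>r\<in>{1..<k}. real (k - r) * phi n (real r)) \<le> TT n S"
proof -
  have fin: "finite S" using S finite_subset by blast
  define ys where "ys = sorted_list_of_set S"
  have srt: "sorted_wrt (<) ys" unfolding ys_def by (rule strict_sorted_list_of_set)
  have st: "set ys = S" using fin by (simp add: ys_def)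
  have di: "distinct ys" by (simp add: ys_def)
  have len: "length ys = k" using c fin by (simp add: ys_def)
  have yn: "set ys \<subseteq> {..<n}" using st S by simp
  have "TT n S = (\<Sum>i<k. \<Sum>j\<in>{..<k}-{i}. phi n (real (ys ! j) - real (ys ! i)))"
    unfolding TT_def st[symmetric] using list_set_sum[OF di, of "\<lambda>a b. phi n (real b - real a)"] len by simp
  also have "\<dots> = (\<Sum>i<k. \<Sum>m\<in>{1..<k}. phi n (real (ys ! (if i + m < k then i + m else i + m - k)) - real (ys ! i)))"
    by (rule T_windows)
  also have "\<dots> = (\<Sum>m\<in>{1..<k}. \<Sum>i<k. phi n (real (ys ! (if i + m < k then i + m else i + m - k)) - real (ys ! i)))"
    by (rule sum.swap)
  finally have T: "TT n S = \<dots>" .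
  have "(\<Sum>m\<in>{1..<k}. real (k - m) * phi n (real m) + real m * phi n (real n - real k + real m)) \<le> TT n S"
    unfolding T by (rule sum_mono) (use window_bound'[OF srt len yn _ _ kn] in auto)
  moreover have "(\<Sum>m\<in>{1..<k}. real (k - m) * phi n (real m) + real m * phi n (real n - real k + real m)) =
      2 * (\<Sum>r\<in>{1..<k}. real (k - r) * phi n (real r))"
  proof -
    have e: "phi n (real n - real k + real m) = phi n (real k - real m)" for m
    proof -
      have "phi n (real n - real k + real m) = phi n (- (real k - real m) + real n * real_of_int 1)"
        by (rule arg_cong[where f="phi n"]) simp
      also have "\<dots> = phi n (- (real k - real m))" by (rule phi_per) (use kn in simp)
      also have "phi n (- (real k - real m)) = phi n (real k - real m)" by (rule phi_even)
      finally show ?thesis .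
    qed
    have r: "(\<Sum>m\<in>{1..<k}. real m * phi n (real k - real m)) = (\<Sum>r\<in>{1..<k}. real (k - r) * phi n (real r))"
      by (rule sum.reindex_bij_witness[where i = "\<lambda>r. k - r" and j = "\<lambda>m. k - m"]) (auto simp: of_nat_diff)
    show ?thesis using r by (simp add: e sum.distrib)
  qed
  ultimately show ?thesis by simp
qed

lemma circ_list: fixes i0 k n :: nat assumes kn: "k \<le> n" and n: "n > 0"
  defines "cl \<equiv> map (\<lambda>t. (i0 + t) mod n) [0..<k]"
  shows "distinct cl" "set cl = circ_succ n k i0" "length cl = k"
proof -
  show "length cl = k" by (simp add: cl_def)
  show "set cl = circ_succ n k i0" by (auto simp: cl_def circ_succ_def)
  have "inj_on (\<lambda>t. (i0 + t) mod n) {0..<k}"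
  proof (rule inj_onI)
    fix a b assume a: "a \<in> {0..<k}" and b: "b \<in> {0..<k}" and e: "(i0 + a) mod n = (i0 + b) mod n"
    show "a = b"
    proof (rule ccontr)
      assume "a \<noteq> b"
      then consider "a < b" | "b < a" by linarith
      then show False
      proof cases
        case 1
        then have "n dvd (i0 + b) - (i0 + a)" using e mod_eq_dvd_iff_nat[of "i0 + a" "i0 + b" n] by simp
        then have "n dvd b - a" by simp
        moreover have "0 < b - a" "b - a < n" using 1 a b kn by auto
        ultimately show False using nat_dvd_not_less by blast
      next
        case 2
        then have "n dvd (i0 + a) - (i0 + b)" using e mod_eq_dvd_iff_nat[of "i0 + b" "i0 + a" n] by simp
        then have "n dvd a - b" by simp
        moreover have "0 < a - b" "a - b < n" using 2 a b kn by auto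
        ultimately show False using nat_dvd_not_less by blast
      qed
    qed
  qed
  then show "distinct cl" by (simp add: cl_def distinct_map)
qed

lemma TT_circ: assumes kn: "k \<le> n" and n: "n > 0"
  shows "TT n (circ_succ n k i0) = 2 * (\<Sum>r\<in>{1..<k}. real (k - r) * phi n (real r))"
proof -
  define cl where "cl = map (\<lambda>t. (i0 + t) mod n) [0..<k]"
  note c = circ_list[OF kn n, of i0, folded cl_def]
  have md: "real ((i0 + t) mod n) = real (i0 + t) - real n * real ((i0 + t) div n)" for t
  proof -
    have "(i0 + t) = n * ((i0 + t) div n) + (i0 + t) mod n" by simp
    then have "real (i0 + t) = real n * real ((i0 + t) div n) + real ((i0 + t) mod n)"
      by (metis of_nat_add of_nat_mult)
    then show ?thesis by simp
  qed
  have e: "phi n (real (cl ! b) - real (cl ! a)) = phi n (real b - real a)" if "a < k" "b < k" for a b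
  proof -
    have "real (cl ! b) - real (cl ! a) = (real b - real a) +
        real n * real_of_int (int ((i0 + a) div n) - int ((i0 + b) div n))"
    proof -
      have "cl ! b = (i0 + b) mod n" "cl ! a = (i0 + a) mod n" using that by (simp_all add: cl_def)
      then show ?thesis by (simp only: md) (simp add: algebra_simps)
    qed
    then show ?thesis using phi_per[OF n, of "real b - real a" "int ((i0 + a) div n) - int ((i0 + b) div n)"] by simp
  qed
  have "TT n (circ_succ n k i0) = 2 * (\<Sum>j<k. \<Sum>i<j. phi n (real (cl ! j) - real (cl ! i)))"
    using list_T[OF c(1) c(3), of n] c(2) by simp
  also have "\<dots> = 2 * (\<Sum>j<k. \<Sum>i<j. phi n (real j - real i))"
    using e by simp
  also have "\<dots> = 2 * (\<Sum>r\<in>{1..<k}. real (k - r) * phi n (real r))"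
    by (simp add: sumpair_nat)
  finally show ?thesis .
qed

lemma Qq_ln: assumes k1: "1 \<le> k" and kn: "k < n"
  shows "Qq n k > 0 \<and> ln (Qq n k) = (\<Sum>r\<in>{1..<k}. real (k - r) * phi n (real r))"
proof -
  have set: "{1..k - 1} = {1..<k}" using k1 by auto
  have pos: "(sin (pi * real r / real n))^2 > 0" if "r \<in> {1..<k}" for r
  proof -
    have "sin (pi * real r / real n) \<noteq> 0" using that kn by (intro sin_nz) auto
    then show ?thesis by simp
  qed
  have Q: "Qq n k > 0" unfolding Qq_def set using pos by (intro prod_pos) auto
  have "ln (Qq n k) = (\<Sum>r\<in>{1..<k}. ln (((sin (pi * real r / real n))^2) ^ (k - r)))"
    unfolding Qq_def set using pos by (intro ln_prod) (auto dest!: pos simp: less_imp_neq)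
  also have "\<dots> = (\<Sum>r\<in>{1..<k}. real (k - r) * phi n (real r))"
    using pos by (intro sum.cong refl) (auto simp: ln_realpow phi_def)
  finally show ?thesis using Q by simp
qed

lemma main_ineq: assumes k1: "1 \<le> k" and kn: "k < n" and d: "distinct xs" and l: "length xs = k"
  and s: "set xs \<subseteq> {..<n}"
  shows "Qq n k \<le> Pp n k xs"
proof -
  have n: "n > 0" using kn by simp
  note P = Pp_ln[OF n d l s] and Q = Qq_ln[OF k1 kn]
  have c: "card (set xs) = k" using d l by (simp add: distinct_card)
  have "ln (Qq n k) \<le> ln (Pp n k xs)" using TT_lower[OF s c k1 kn] P Q by simp
  then show ?thesis using P Q by (subst (asm) ln_le_cancel_iff) auto
qed

lemma main_eq: assumes k1: "1 \<le> k" and kn: "k < n" and d: "distinct xs" and l: "length xs = k"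
  and s: "set xs = circ_succ n k i0"
  shows "Pp n k xs = Qq n k"
proof -
  have n: "n > 0" using kn by simp
  have s': "set xs \<subseteq> {..<n}" using s n by (auto simp: circ_succ_def)
  note P = Pp_ln[OF n d l s'] and Q = Qq_ln[OF k1 kn]
  have "ln (Pp n k xs) = ln (Qq n k)" using TT_circ[of k n i0] kn n P Q s by simp
  then show ?thesis using P Q by (subst (asm) ln_inj_iff) auto
qed


lemma prod4: fixes f :: "nat \<Rightarrow> nat \<Rightarrow> real" shows
  "(\<Prod>j<k. \<Prod>i<j. 4 * f j i) = 2 ^ (k * (k - 1)) * (\<Prod>j<k. \<Prod>i<j. f j i)"
proof (induction k)
  case 0 then show ?case by simp
next
  case (Suc k)
  have e: "(2::real) ^ (k * (k - 1)) * 4 ^ k = 2 ^ (Suc k * (Suc k - 1))"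
  proof -
    have "(4::real) ^ k = 2 ^ (2 * k)" by (simp add: power_mult)
    moreover have "k * (k - 1) + 2 * k = Suc k * (Suc k - 1)" by (cases k) (simp_all add: algebra_simps)
    ultimately show ?thesis by (metis power_add)
  qed
  have "(\<Prod>j<Suc k. \<Prod>i<j. 4 * f j i) = (\<Prod>j<k. \<Prod>i<j. 4 * f j i) * (4 ^ k * (\<Prod>i<k. f k i))"
    by (simp add: prod.distrib)
  also have "\<dots> = (2 ^ (k * (k - 1)) * 4 ^ k) * ((\<Prod>j<k. \<Prod>i<j. f j i) * (\<Prod>i<k. f k i))"
    unfolding Suc.IH by (simp add: algebra_simps)
  also have "\<dots> = 2 ^ (Suc k * (Suc k - 1)) * (\<Prod>j<Suc k. \<Prod>i<j. f j i)"
    unfolding e by simp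
  finally show ?case .
qed

theorem mainTheorem6:
  fixes n k :: nat
  assumes "1 \<le> k" and "k < n" and "\<not> (even n \<and> even k)"
  defines "V \<equiv> (2 ^ (k * (k - 1)) / real k ^ k) *
                 (\<Prod>r = 1..k - 1. (sin (pi * real r / real n) ^ 2) ^ (k - r))"
  shows "(\<forall>rs. length rs = k \<and> distinct rs \<and> set rs \<subseteq> {..<n} \<longrightarrow>
            (let D = det (row_submat (G_mat n k) rs * mat_H (row_submat (G_mat n k) rs))
             in D \<in> \<real> \<and> V \<le> Re D))
       \<and> (\<forall>rs i. i < n \<and> length rs = k \<and> distinct rs \<and> set rs = circ_succ n k i \<longrightarrow>
            det (row_submat (G_mat n k) rs * mat_H (row_submat (G_mat n k) rs))
              = complex_of_real V)"
proof -
  have n0: "n > 0" using assms by simp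
  define c :: real where "c = 2 ^ (k * (k - 1)) / real k ^ k"
  have c0: "c \<ge> 0" by (simp add: c_def)
  have Vq: "V = c * Qq n k" unfolding V_def Qq_def c_def by simp
  have Dform: "det (row_submat (G_mat n k) rs * mat_H (row_submat (G_mat n k) rs)) =
      complex_of_real (c * Pp n k rs)" if l: "length rs = k" and s: "set rs \<subseteq> {..<n}" for rs
  proof -
    have "det (row_submat (G_mat n k) rs * mat_H (row_submat (G_mat n k) rs)) =
      complex_of_real ((1 / real k) ^ k *
       (\<Prod>j<k. \<Prod>i<j. 4 * (sin (pi * (real (rs ! j) - real (rs ! i)) / real n))^2))"
      by (rule D_formula[OF assms(1,2) l s])
    also have "(\<Prod>j<k. \<Prod>i<j. 4 * (sin (pi * (real (rs ! j) - real (rs ! i)) / real n))^2) =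
        2 ^ (k * (k - 1)) * Pp n k rs"
      unfolding Pp_def by (rule prod4)
    finally show ?thesis by (simp add: c_def power_one_over)
  qed
  show ?thesis
  proof (intro conjI allI impI)
    fix rs assume h: "length rs = k \<and> distinct rs \<and> set rs \<subseteq> {..<n}"
    have "Qq n k \<le> Pp n k rs" using main_ineq[OF assms(1,2)] h by blast
    then have "V \<le> c * Pp n k rs" unfolding Vq using c0 by (rule mult_left_mono)
    then show "let D = det (row_submat (G_mat n k) rs * mat_H (row_submat (G_mat n k) rs))
             in D \<in> \<real> \<and> V \<le> Re D"
      unfolding Let_def Dform[OF conjunct1[OF h] conjunct2[OF conjunct2[OF h]]] by simp
  next
    fix rs i assume h: "i < n \<and> length rs = k \<and> distinct rs \<and> set rs = circ_succ n k i"
    have s: "set rs \<subseteq> {..<n}" using h n0 by (auto simp: circ_succ_def)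
    have "Pp n k rs = Qq n k" using main_eq[OF assms(1,2)] h by blast
    then show "det (row_submat (G_mat n k) rs * mat_H (row_submat (G_mat n k) rs)) = complex_of_real V"
      unfolding Dform[OF conjunct1[OF conjunct2[OF h]] s] Vq by simp
  qed
qed

end
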